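(* Let $d\ge2$ and $n\ge2$, and consider the vector program $$\max\ \frac12\left(\frac{d-1}{d}\right)-\frac14\sum_{a=1}^{d^2-1}\frac{1}{\binom n2}\sum_{1\le u<v\le n}\langle x^a_u,x^a_v\rangle$$ over real vectors $x^a_u\in\mathbb R^{m}$ ($m$ arbitrary, $a\in[d^2-1]$, $u\in[n]$) subject to $\langle x^a_u,x^b_u\rangle=\frac2d\delta_{ab}$ for all $u$ and all $a,b$. Its optimal value equals $\frac{(d-1)(d+n)}{2d(n-1)}$.
   Context: This vector program is the level-two noncommutative sum-of-squares relaxation of Quantum Max-$d$-Cut on the unweighted complete graph $K_n$, written in terms of the Gram vectors $x^a_u$ of the generalized Gell-Mann observables $\Lambda^a_u$. *)

theory Defs
  imports Complex_Main
begin

text \<open>Vectors in R^m are represented as functions nat => real, of which only the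
  coordinates 0..m-1 matter. Indices a in [d^2-1] and u in [n] are 0-based.\<close>

definition inner_m :: "nat \<Rightarrow> (nat \<Rightarrow> real) \<Rightarrow> (nat \<Rightarrow> real) \<Rightarrow> real" where
  "inner_m m y z = (\<Sum>i<m. y i * z i)"

definition qmc_feasible :: "nat \<Rightarrow> nat \<Rightarrow> nat \<Rightarrow> (nat \<Rightarrow> nat \<Rightarrow> nat \<Rightarrow> real) \<Rightarrow> bool" where
  "qmc_feasible d n m x \<longleftrightarrow>
     (\<forall>u<n. \<forall>a<d^2-1. \<forall>b<d^2-1.
        inner_m m (x a u) (x b u) = (if a = b then 2 / real d else 0))"

definition qmc_objective :: "nat \<Rightarrow> nat \<Rightarrow> nat \<Rightarrow> (nat \<Rightarrow> nat \<Rightarrow> nat \<Rightarrow> real) \<Rightarrow> real" where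
  "qmc_objective d n m x =
     1/2 * ((real d - 1) / real d)
     - 1/4 * (\<Sum>a<d^2-1. (1 / real (n choose 2)) *
                 (\<Sum>u<n. \<Sum>v\<in>{u<..<n}. inner_m m (x a u) (x a v)))"

end

theory Submission
  imports Defs
begin

lemma sum_block:
  fixes h :: "nat \<Rightarrow> nat \<Rightarrow> real"
  shows "(\<Sum>i<K*n. h (i div n) (i mod n)) = (\<Sum>a<K. \<Sum>w<n. h a w)"
proof (induction K)
  case 0 then show ?case by simp
next
  case (Suc K)
  have split: "{..<Suc K * n} = {..<K*n} \<union> {K*n..<K*n+n}" by auto
  have "(\<Sum>i\<in>{K*n..<K*n+n}. h (i div n) (i mod n)) = (\<Sum>w<n. h K w)"
  proof -
    have "(\<Sum>i\<in>{K*n..<K*n+n}. h (i div n) (i mod n)) = (\<Sum>w\<in>{0..<n}. h ((w + K*n) div n) ((w+K*n) mod n))"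
      using sum.shift_bounds_nat_ivl[of "\<lambda>i. h (i div n) (i mod n)" 0 "K*n" n] by (simp add: add.commute)
    also have "\<dots> = (\<Sum>w<n. h K w)"
      by (rule sum.cong) (auto simp: lessThan_atLeast0)
    finally show ?thesis .
  qed
  moreover have "(\<Sum>i<Suc K * n. h (i div n) (i mod n)) = (\<Sum>i<K*n. h (i div n) (i mod n)) + (\<Sum>i\<in>{K*n..<K*n+n}. h (i div n) (i mod n))"
    unfolding split by (rule sum.union_disjoint) auto
  ultimately show ?case using Suc.IH by simp
qed

lemma double_sym:
  fixes f :: "nat \<Rightarrow> nat \<Rightarrow> real"
  assumes sym: "\<And>u v. f u v = f v u"
  shows "(\<Sum>u<n. \<Sum>v<n. f u v) = (\<Sum>u<n. f u u) + 2 * (\<Sum>u<n. \<Sum>v\<in>{u<..<n}. f u v)"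
proof (induction n)
  case 0 then show ?case by simp
next
  case (Suc n)
  have A: "(\<Sum>u<Suc n. \<Sum>v<Suc n. f u v) = (\<Sum>u<n. \<Sum>v<n. f u v) + 2 * (\<Sum>u<n. f u n) + f n n"
  proof -
    have "(\<Sum>u<Suc n. \<Sum>v<Suc n. f u v) = (\<Sum>u<Suc n. (\<Sum>v<n. f u v) + f u n)" by simp
    also have "\<dots> = (\<Sum>u<n. \<Sum>v<n. f u v) + (\<Sum>u<n. f u n) + ((\<Sum>v<n. f n v) + f n n)"
      by (simp add: sum.distrib)
    also have "(\<Sum>v<n. f n v) = (\<Sum>u<n. f u n)" using sym by simp
    finally show ?thesis by simp
  qed
  have B: "(\<Sum>u<Suc n. \<Sum>v\<in>{u<..<Suc n}. f u v) = (\<Sum>u<n. \<Sum>v\<in>{u<..<n}. f u v) + (\<Sum>u<n. f u n)"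
  proof -
    have "(\<Sum>u<Suc n. \<Sum>v\<in>{u<..<Suc n}. f u v) = (\<Sum>u<n. \<Sum>v\<in>{u<..<Suc n}. f u v)"
      proof -
      have "{n<..<Suc n} = {}" by auto
      then show ?thesis by simp
    qed
    also have "\<dots> = (\<Sum>u<n. (\<Sum>v\<in>{u<..<n}. f u v) + f u n)"
    proof (rule sum.cong)
      fix u assume "u \<in> {..<n}"
      then have "{u<..<Suc n} = insert n {u<..<n}" by auto
      then show "(\<Sum>v\<in>{u<..<Suc n}. f u v) = (\<Sum>v\<in>{u<..<n}. f u v) + f u n" by simp
    qed simp
    finally show ?thesis using greaterThanLessThan_empty[of n "Suc n"] by (simp add: sum.distrib)
  qed
  have C: "(\<Sum>u<Suc n. f u u) = (\<Sum>u<n. f u u) + f n n" by simp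
  show ?case using A B C Suc.IH by linarith
qed

lemma gram_nonneg:
  fixes y :: "nat \<Rightarrow> nat \<Rightarrow> real"
  shows "0 \<le> (\<Sum>u<n. \<Sum>v<n. inner_m m (y u) (y v))"
proof -
  have "(\<Sum>u<n. \<Sum>v<n. inner_m m (y u) (y v)) = (\<Sum>i<m. (\<Sum>u<n. y u i) * (\<Sum>v<n. y v i))"
  proof -
    have "(\<Sum>u<n. \<Sum>v<n. inner_m m (y u) (y v)) = (\<Sum>u<n. \<Sum>i<m. \<Sum>v<n. y u i * y v i)"
      unfolding inner_m_def by (rule sum.cong[OF refl], rule sum.swap)
    also have "\<dots> = (\<Sum>i<m. \<Sum>u<n. \<Sum>v<n. y u i * y v i)" by (rule sum.swap)
    also have "\<dots> = (\<Sum>i<m. (\<Sum>u<n. y u i) * (\<Sum>v<n. y v i))" by (simp add: sum_product)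
    finally show ?thesis .
  qed
  also have "\<dots> \<ge> 0" by (intro sum_nonneg) simp
  finally show ?thesis .
qed

lemma pairs_count:
  "2 * (\<Sum>u<n. \<Sum>v\<in>{u<..<n}. (1::real)) = real n * (real n - 1)"
  using double_sym[of "\<lambda>u v. 1::real" n] by (simp add: algebra_simps)

lemma choose2_real: "real (n choose 2) = real n * (real n - 1) / 2"
proof (cases n)
  case 0 then show ?thesis by simp
next
  case (Suc k)
  have "n choose 2 = n * (n - 1) div 2" by (rule choose_two)
  moreover have "even (n * (n - 1))" by auto
  ultimately have "2 * (n choose 2) = n * (n - 1)" by simp
  then have "2 * real (n choose 2) = real n * real (n - 1)" by (metis of_nat_mult of_nat_numeral)
  then show ?thesis using Suc by simp
qed


lemma inner_sym: "inner_m m y z = inner_m m z y"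
  unfolding inner_m_def by (simp add: mult.commute)

lemma delta_sum:
  assumes "u < n" "v < n"
  shows "(\<Sum>w<n. ((if w = u then 1 else 0) - 1/real n) * ((if w = v then 1 else 0) - 1/real n))
         = (if u = v then 1 else 0) - 1/real n"
proof -
  have n0: "real n > 0" using assms by simp
  have "(\<Sum>w<n. ((if w = u then 1 else 0) - 1/real n) * ((if w = v then 1 else 0) - 1/real n))
     = (\<Sum>w<n. (if w = u \<and> w = v then 1 else 0) - (if w = u then 1 else 0)/real n
        - (if w = v then 1 else 0)/real n + 1/(real n)^2)"
    by (rule sum.cong) (auto simp: field_simps power2_eq_square)
  also have "\<dots> = (\<Sum>w<n. (if w = u \<and> w = v then 1 else 0)) - (\<Sum>w<n. (if w = u then 1 else 0))/real n
        - (\<Sum>w<n. (if w = v then 1 else 0))/real n + (\<Sum>w<n. 1/(real n)^2)"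
    by (simp only: sum.distrib sum_subtractf sum_divide_distrib)
  also have "\<dots> = (if u = v then 1 else 0) - 1/real n - 1/real n + real n / (real n)^2"
  proof -
    have "(\<Sum>w<n. if w = u \<and> w = v then 1 else 0) = (if u = v then 1 else (0::real))"
      using assms by (cases "u = v") (auto intro!: sum.neutral)
    then show ?thesis using assms by (simp add: sum.delta)
  qed
  also have "\<dots> = (if u = v then 1 else 0) - 1/real n" using n0 by (simp add: power2_eq_square)
  finally show ?thesis .
qed

lemma pair_lower:
  assumes feas: "qmc_feasible d n m x" and a: "a < d^2-1" and d: "d \<ge> 1"
  shows "(\<Sum>u<n. \<Sum>v\<in>{u<..<n}. inner_m m (x a u) (x a v)) \<ge> - real n / real d"
proof -
  have diag: "\<And>u. u < n \<Longrightarrow> inner_m m (x a u) (x a u) = 2 / real d"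
    using feas a unfolding qmc_feasible_def by simp
  have "(\<Sum>u<n. inner_m m (x a u) (x a u)) = real n * (2 / real d)"
    using diag by simp
  moreover have "0 \<le> (\<Sum>u<n. inner_m m (x a u) (x a u)) + 2 * (\<Sum>u<n. \<Sum>v\<in>{u<..<n}. inner_m m (x a u) (x a v))"
  proof -
    have S: "(\<Sum>u<n. \<Sum>v<n. inner_m m (x a u) (x a v)) = (\<Sum>u<n. inner_m m (x a u) (x a u)) + 2 * (\<Sum>u<n. \<Sum>v\<in>{u<..<n}. inner_m m (x a u) (x a v))"
      by (rule double_sym) (rule inner_sym)
    show ?thesis using gram_nonneg[where n=n and m=m and y="x a"] unfolding S .
  qed
  ultimately show ?thesis by (simp add: field_simps)
qed

lemma lin_aux: "- (t::real) \<le> S \<Longrightarrow> 1/4 * t = r \<Longrightarrow> A - 1/4 * S \<le> A + r"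
  by linarith

theorem mainTheorem15:
  fixes d n :: nat
  assumes "d \<ge> 2" and "n \<ge> 2"
  shows "(\<exists>m x. qmc_feasible d n m x \<and>
            qmc_objective d n m x = (real d - 1) * (real d + real n) / (2 * real d * (real n - 1)))
       \<and> (\<forall>m x. qmc_feasible d n m x \<longrightarrow>
            qmc_objective d n m x \<le> (real d - 1) * (real d + real n) / (2 * real d * (real n - 1)))"
proof -
  define K where "K = d^2 - 1"
  have dpos: "real d > 0" using assms by simp
  have n1: "real n - 1 > 0" using assms by simp
  have npos: "real n > 0" using assms by simp
  have KR: "real K = (real d)^2 - 1" unfolding K_def using assms
    by (simp add: of_nat_diff)
  have C: "real (n choose 2) = real n * (real n - 1) / 2" by (rule choose2_real)
  have Cpos: "real (n choose 2) > 0" using C npos n1 by simp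
  have target: "(real d - 1) / (2 * real d) + real K / (2 * real d * (real n - 1))
      = (real d - 1) * (real d + real n) / (2 * real d * (real n - 1))"
    using dpos n1 by (simp add: KR field_simps power2_eq_square)
  have obj: "qmc_objective d n m x = (real d - 1) / (2 * real d)
       - 1/4 * (\<Sum>a<K. (1 / real (n choose 2)) * (\<Sum>u<n. \<Sum>v\<in>{u<..<n}. inner_m m (x a u) (x a v)))"
    for m x unfolding qmc_objective_def K_def by simp
  show ?thesis
  proof
    define c where "c = sqrt (2 * real n / (real d * (real n - 1)))"
    have c2: "c * c = 2 * real n / (real d * (real n - 1))"
      unfolding c_def using dpos n1 npos by simp
    define X where "X a u p w = (if p = a then c * ((if w = u then 1 else 0) - 1/real n) else (0::real))"
      for a u p w :: nat
    define x where "x a u i = X a u (i div n) (i mod n)" for a u i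
    have inn: "inner_m (K*n) (x a u) (x b v) = (if a = b then c * c * ((if u = v then 1 else 0) - 1/real n) else 0)"
      if "a < K" "b < K" "u < n" "v < n" for a b u v
    proof -
      have "inner_m (K*n) (x a u) (x b v) = (\<Sum>p<K. \<Sum>w<n. X a u p w * X b v p w)"
        unfolding inner_m_def x_def by (rule sum_block)
      also have "\<dots> = (if a = b then (\<Sum>w<n. X a u a w * X b v a w) else 0)"
      proof (cases "a = b")
        case True
        have "(\<Sum>p<K. \<Sum>w<n. X a u p w * X b v p w) = (\<Sum>p<K. if p = a then (\<Sum>w<n. X a u a w * X b v a w) else 0)"
          by (rule sum.cong) (auto simp: X_def)
        then show ?thesis using True that by (simp add: sum.delta)
      next
        case False then show ?thesis by (auto simp: X_def intro!: sum.neutral)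
      qed
      also have "\<dots> = (if a = b then c * c * ((if u = v then 1 else 0) - 1/real n) else 0)"
      proof -
        have "(\<Sum>w<n. X a u a w * X a v a w) = c * c * (\<Sum>w<n. ((if w = u then 1 else 0) - 1/real n) * ((if w = v then 1 else 0) - 1/real n))"
          by (simp add: X_def sum_distrib_left algebra_simps)
        then show ?thesis using delta_sum[OF that(3,4)] by (cases "a = b") auto
      qed
      finally show ?thesis .
    qed
    have feas: "qmc_feasible d n (K*n) x"
      unfolding qmc_feasible_def K_def[symmetric]
    proof (intro allI impI)
      fix u a b assume "u < n" "a < K" "b < K"
      then show "inner_m (K*n) (x a u) (x b u) = (if a = b then 2 / real d else 0)"
      proof -
        have e: "c * c * (1 - 1 / real n) = 2 / real d"
          unfolding c2 using dpos n1 npos by (simp add: field_simps)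
        show ?thesis using inn[OF \<open>a < K\<close> \<open>b < K\<close> \<open>u < n\<close> \<open>u < n\<close>] e by simp
      qed
    qed
    have pairs: "(\<Sum>u<n. \<Sum>v\<in>{u<..<n}. inner_m (K*n) (x a u) (x a v)) = - real n / real d" if "a < K" for a
    proof -
      have "(\<Sum>u<n. \<Sum>v\<in>{u<..<n}. inner_m (K*n) (x a u) (x a v))
          = (\<Sum>u<n. \<Sum>v\<in>{u<..<n}. - c * c / real n)"
        by (intro sum.cong refl) (simp add: inn that)
      also have "\<dots> = (- c * c / real n) * (\<Sum>u<n. \<Sum>v\<in>{u<..<n}. (1::real))"
        by (simp only: sum_distrib_left mult_1_right)
      also have "\<dots> = - real n / real d"
      proof -
        define P where "P = (\<Sum>u<n. \<Sum>v\<in>{u<..<n}. (1::real))"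
        have hP: "P = real n * (real n - 1) / 2" using pairs_count[of n] unfolding P_def by simp
        have "- c * c / real n * (real n * (real n - 1) / 2) = - (c * c) * (real n - 1) / 2"
          using npos by (simp add: field_simps)
        also have "\<dots> = - real n / real d" unfolding c2 using dpos n1 npos by (simp add: field_simps)
        finally show ?thesis unfolding P_def[symmetric] hP .
      qed
      finally show ?thesis .
    qed
    have "qmc_objective d n (K*n) x = (real d - 1) / (2 * real d)
       - 1/4 * (\<Sum>a<K. (1 / real (n choose 2)) * (- real n / real d))"
      unfolding obj by (simp add: pairs)
    also have "\<dots> = (real d - 1) / (2 * real d) + real K / (2 * real d * (real n - 1))"
      unfolding C using dpos n1 npos by (simp add: field_simps)
    finally show "\<exists>m x. qmc_feasible d n m x \<and>
            qmc_objective d n m x = (real d - 1) * (real d + real n) / (2 * real d * (real n - 1))"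
      using feas target by auto
  next
    show "\<forall>m x. qmc_feasible d n m x \<longrightarrow>
            qmc_objective d n m x \<le> (real d - 1) * (real d + real n) / (2 * real d * (real n - 1))"
    proof (intro allI impI)
      fix m x assume feas: "qmc_feasible d n m x"
      have "(\<Sum>a<K. (1 / real (n choose 2)) * (- real n / real d))
            \<le> (\<Sum>a<K. (1 / real (n choose 2)) * (\<Sum>u<n. \<Sum>v\<in>{u<..<n}. inner_m m (x a u) (x a v)))"
      proof (rule sum_mono)
        fix a assume "a \<in> {..<K}"
        then have "(\<Sum>u<n. \<Sum>v\<in>{u<..<n}. inner_m m (x a u) (x a v)) \<ge> - real n / real d"
          using pair_lower[OF feas] assms unfolding K_def by simp
        then show "(1 / real (n choose 2)) * (- real n / real d)
            \<le> (1 / real (n choose 2)) * (\<Sum>u<n. \<Sum>v\<in>{u<..<n}. inner_m m (x a u) (x a v))"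
          using Cpos by (intro mult_left_mono) auto
      qed
      moreover have "(\<Sum>a<K. (1 / real (n choose 2)) * (- real n / real d)) = - (real K / (real d * (real n - 1)) * 2)"
        unfolding C using dpos n1 npos by (simp add: field_simps)
      ultimately have low: "- (real K / (real d * (real n - 1)) * 2)
          \<le> (\<Sum>a<K. (1 / real (n choose 2)) * (\<Sum>u<n. \<Sum>v\<in>{u<..<n}. inner_m m (x a u) (x a v)))"
        by linarith
      have eq: "1/4 * (real K / (real d * (real n - 1)) * 2) = real K / (2 * real d * (real n - 1))"
        by (simp add: field_simps)
      have "qmc_objective d n m x \<le> (real d - 1) / (2 * real d) + real K / (2 * real d * (real n - 1))"
        unfolding obj by (rule lin_aux[OF low eq])
      then show "qmc_objective d n m x \<le> (real d - 1) * (real d + real n) / (2 * real d * (real n - 1))"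
        using target by simp
    qed
  qed
qed

end
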